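(* Let $G=(V,E)$ be a simple, unoriented, locally finite graph with graph distance $d$, and let $x\neq x'$ be two vertices at finite distance, each of positive degree. Then for every $t\in(0,1/2]$, $$\operatorname{ric}(x,x')=\frac{\kappa^t(x,x')}{t}.$$
   Context: For a vertex $x$, $S_x$ is the set of neighbours of $x$, $d_x=|S_x|$, and $d$ is the graph distance (length of a shortest edge path). The lazy random walk $\mu^t_x$ is the probability measure with $\mu^t_x(x)=1-t$, $\mu^t_x(y)=t/d_x$ for $y\in S_x$, and $0$ elsewhere. A coupling between probability measures $\mu,\mu'$ on $V$ is a nonnegative function $\xi$ on $V\times V$ with marginals $\mu$ and $\mu'$. The Wasserstein distance is $W_1(\mu,\mu')=\inf_\xi\sum_{y,y'}\xi(y,y')d(y,y')$, the infimum over all couplings. Set $\kappa^t(x,x')=1-\frac{W_1(\mu^t_x,\mu^t_{x'})}{d(x,x')}$ and define the (asymptotic) Ollivier–Ricci curvature $\operatorname{ric}(x,x')=\liminf_{t\to0^+}\kappa^t(x,x')/t$. *)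

theory Defs
  imports "HOL-Analysis.Analysis"
begin

definition simple_graph :: "('a \<Rightarrow> 'a \<Rightarrow> bool) \<Rightarrow> bool" where
  "simple_graph E \<longleftrightarrow> (\<forall>x. \<not> E x x) \<and> (\<forall>x y. E x y \<longrightarrow> E y x)"

definition nbhd :: "('a \<Rightarrow> 'a \<Rightarrow> bool) \<Rightarrow> 'a \<Rightarrow> 'a set" where
  "nbhd E x = {y. E x y}"

definition locally_finite :: "('a \<Rightarrow> 'a \<Rightarrow> bool) \<Rightarrow> bool" where
  "locally_finite E \<longleftrightarrow> (\<forall>x. finite (nbhd E x))"

definition deg :: "('a \<Rightarrow> 'a \<Rightarrow> bool) \<Rightarrow> 'a \<Rightarrow> nat" where
  "deg E x = card (nbhd E x)"

definition walk_of_length :: "('a \<Rightarrow> 'a \<Rightarrow> bool) \<Rightarrow> 'a \<Rightarrow> 'a \<Rightarrow> nat \<Rightarrow> bool" where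
  "walk_of_length E x y n \<longleftrightarrow>
     (\<exists>p. length p = Suc n \<and> p ! 0 = x \<and> p ! n = y \<and> (\<forall>i<n. E (p ! i) (p ! Suc i)))"

text \<open>Graph distance (only meaningful for vertices at finite distance).\<close>
definition gdist :: "('a \<Rightarrow> 'a \<Rightarrow> bool) \<Rightarrow> 'a \<Rightarrow> 'a \<Rightarrow> nat" where
  "gdist E x y = (LEAST n. walk_of_length E x y n)"

definition finite_distance :: "('a \<Rightarrow> 'a \<Rightarrow> bool) \<Rightarrow> 'a \<Rightarrow> 'a \<Rightarrow> bool" where
  "finite_distance E x y \<longleftrightarrow> (\<exists>n. walk_of_length E x y n)"

definition lazy_rw :: "('a \<Rightarrow> 'a \<Rightarrow> bool) \<Rightarrow> real \<Rightarrow> 'a \<Rightarrow> 'a \<Rightarrow> real" where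
  "lazy_rw E t x y = (if y = x then 1 - t else if E x y then t / real (deg E x) else 0)"

definition coupling :: "('a \<Rightarrow> real) \<Rightarrow> ('a \<Rightarrow> real) \<Rightarrow> ('a \<times> 'a \<Rightarrow> real) \<Rightarrow> bool" where
  "coupling \<mu> \<mu>' \<xi> \<longleftrightarrow> (\<forall>p. \<xi> p \<ge> 0)
     \<and> (\<forall>y. ((\<lambda>y'. \<xi> (y, y')) has_sum \<mu> y) UNIV)
     \<and> (\<forall>y'. ((\<lambda>y. \<xi> (y, y')) has_sum \<mu>' y') UNIV)"

definition transport_cost :: "('a \<Rightarrow> 'a \<Rightarrow> bool) \<Rightarrow> ('a \<times> 'a \<Rightarrow> real) \<Rightarrow> real" where
  "transport_cost E \<xi> = (\<Sum>\<^sub>\<infinity>(y, y')\<in>UNIV. \<xi> (y, y') * real (gdist E y y'))"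

definition W1 :: "('a \<Rightarrow> 'a \<Rightarrow> bool) \<Rightarrow> ('a \<Rightarrow> real) \<Rightarrow> ('a \<Rightarrow> real) \<Rightarrow> real" where
  "W1 E \<mu> \<mu>' = Inf (transport_cost E ` {\<xi>. coupling \<mu> \<mu>' \<xi>})"

definition kappa :: "('a \<Rightarrow> 'a \<Rightarrow> bool) \<Rightarrow> real \<Rightarrow> 'a \<Rightarrow> 'a \<Rightarrow> real" where
  "kappa E t x x' = 1 - W1 E (lazy_rw E t x) (lazy_rw E t x') / real (gdist E x x')"

definition ric :: "('a \<Rightarrow> 'a \<Rightarrow> bool) \<Rightarrow> 'a \<Rightarrow> 'a \<Rightarrow> ereal" where
  "ric E x x' = Liminf (at_right 0) (\<lambda>t. ereal (kappa E t x x' / t))"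

end

theory Submission
  imports Defs
begin

lemma term_le_has_sum:
  fixes f :: "'b \<Rightarrow> real"
  assumes "\<And>z. f z \<ge> 0" "(f has_sum S) UNIV"
  shows "f z \<le> S"
proof -
  have "(f has_sum (f z)) {z}" using has_sum_finite[of "{z}" f] by simp
  from has_sum_mono_neutral[OF this assms(2)] show ?thesis using assms(1) by auto
qed

lemma coupling_zero1:
  assumes "coupling \<mu> \<nu> \<xi>" "\<mu> y = 0"
  shows "\<xi> (y, y') = 0"
proof -
  have "\<xi> (y,y') \<le> \<mu> y" using assms(1) unfolding coupling_def
    by (intro term_le_has_sum[where f="\<lambda>y'. \<xi> (y, y')"]) auto
  moreover have "\<xi> (y,y') \<ge> 0" using assms(1) unfolding coupling_def by auto
  ultimately show ?thesis using assms(2) by auto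
qed

lemma coupling_zero2:
  assumes "coupling \<mu> \<nu> \<xi>" "\<nu> y' = 0"
  shows "\<xi> (y, y') = 0"
proof -
  have "\<xi> (y,y') \<le> \<nu> y'" using assms(1) unfolding coupling_def
    by (intro term_le_has_sum[where f="\<lambda>y. \<xi> (y, y')"]) auto
  moreover have "\<xi> (y,y') \<ge> 0" using assms(1) unfolding coupling_def by auto
  ultimately show ?thesis using assms(2) by auto
qed

lemma coupling_le2:
  assumes "coupling \<mu> \<nu> \<xi>"
  shows "\<xi> (y, y') \<le> \<nu> y'"
  using assms unfolding coupling_def
  by (intro term_le_has_sum[where f="\<lambda>y. \<xi> (y, y')"]) auto

lemma cost_finite:
  assumes "coupling \<mu> \<nu> \<xi>" "finite S" "finite T"
    "\<And>y. y \<notin> S \<Longrightarrow> \<mu> y = 0" "\<And>y. y \<notin> T \<Longrightarrow> \<nu> y = 0"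
  shows "transport_cost E \<xi> = (\<Sum>p\<in>S\<times>T. \<xi> p * real (gdist E (fst p) (snd p)))"
proof -
  have "transport_cost E \<xi> = infsum (\<lambda>p. \<xi> p * real (gdist E (fst p) (snd p))) (S \<times> T)"
    unfolding transport_cost_def
  proof (rule infsum_cong_neutral)
    fix p assume "p \<in> UNIV - S \<times> T"
    then obtain a b where p: "p = (a,b)" "a \<notin> S \<or> b \<notin> T" by (cases p) auto
    then have "\<xi> p = 0" using coupling_zero1[OF assms(1)] coupling_zero2[OF assms(1)] assms(4,5)
      by auto
    then show "(case p of (y, y') \<Rightarrow> \<xi> (y, y') * real (gdist E y y')) = 0" using p by simp
  qed (auto split: prod.splits)
  also have "\<dots> = (\<Sum>p\<in>S\<times>T. \<xi> p * real (gdist E (fst p) (snd p)))"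
    using assms(2,3) by simp
  finally show ?thesis .
qed

lemma row_sum:
  assumes "coupling \<mu> \<nu> \<xi>" "finite T" "\<And>y. y \<notin> T \<Longrightarrow> \<nu> y = 0"
  shows "(\<Sum>y'\<in>T. \<xi> (y, y')) = \<mu> y"
proof -
  have "((\<lambda>y'. \<xi> (y, y')) has_sum (\<Sum>y'\<in>T. \<xi> (y, y'))) UNIV"
    by (rule has_sum_finite_neutralI) (use assms coupling_zero2[OF assms(1)] in auto)
  moreover have "((\<lambda>y'. \<xi> (y, y')) has_sum \<mu> y) UNIV" using assms(1) unfolding coupling_def by auto
  ultimately show ?thesis using has_sum_unique by blast
qed

lemma delta_has_sum:
  "((\<lambda>y'. b * (if (y, y') = (x, x') then 1 else 0)) has_sum (b * (if y = x then 1 else 0 :: real))) UNIV"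
  by (rule has_sum_finite_neutralI[where B="{x'}"]) auto

lemma delta_has_sum2:
  "((\<lambda>y. b * (if (y, y') = (x, x') then 1 else 0)) has_sum (b * (if y' = x' then 1 else 0 :: real))) UNIV"
  by (rule has_sum_finite_neutralI[where B="{x}"]) auto

lemma lin_coupling:
  assumes "coupling \<mu> \<nu> \<xi>" "\<And>p. a * \<xi> p + b * (if p = (x,x') then 1 else 0) \<ge> 0"
  shows "coupling (\<lambda>y. a * \<mu> y + b * (if y = x then 1 else 0))
                  (\<lambda>y'. a * \<nu> y' + b * (if y' = x' then 1 else 0))
                  (\<lambda>p. a * \<xi> p + b * (if p = (x,x') then 1 else 0))"
  unfolding coupling_def
proof (intro conjI allI)
  fix p show "a * \<xi> p + b * (if p = (x,x') then 1 else 0) \<ge> 0" using assms(2) by auto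
next
  fix y
  have "((\<lambda>y'. \<xi> (y, y')) has_sum \<mu> y) UNIV" using assms(1) unfolding coupling_def by auto
  from has_sum_add[OF has_sum_cmult_right[OF this, of a] delta_has_sum[of b y x x']]
  show "((\<lambda>y'. a * \<xi> (y, y') + b * (if (y, y') = (x, x') then 1 else 0)) has_sum
          (a * \<mu> y + b * (if y = x then 1 else 0))) UNIV" .
next
  fix y'
  have "((\<lambda>y. \<xi> (y, y')) has_sum \<nu> y') UNIV" using assms(1) unfolding coupling_def by auto
  from has_sum_add[OF has_sum_cmult_right[OF this, of a] delta_has_sum2[of b y' x x']]
  show "((\<lambda>y. a * \<xi> (y, y') + b * (if (y, y') = (x, x') then 1 else 0)) has_sum
          (a * \<nu> y' + b * (if y' = x' then 1 else 0))) UNIV" .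
qed

lemma lazy_lin:
  assumes "t > 0"
  shows "lazy_rw E s x = (\<lambda>y. (s/t) * lazy_rw E t x y + (1 - s/t) * (if y = x then 1 else 0))"
  using assms by (auto simp: lazy_rw_def field_simps)

lemma lazy_support: "y \<notin> insert x (nbhd E x) \<Longrightarrow> lazy_rw E t x y = 0"
  by (auto simp: lazy_rw_def nbhd_def)

lemma lazy_nonneg: "0 \<le> t \<Longrightarrow> t \<le> 1 \<Longrightarrow> lazy_rw E t x y \<ge> 0"
  by (auto simp: lazy_rw_def)

lemma lazy_total:
  assumes "simple_graph E" "finite (nbhd E x)" "deg E x > 0"
  shows "((lazy_rw E t x) has_sum 1) UNIV"
proof (rule has_sum_finite_neutralI[where B="insert x (nbhd E x)"])
  show "finite (insert x (nbhd E x))" using assms by auto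
  show "\<And>y. y \<in> UNIV - insert x (nbhd E x) \<Longrightarrow> lazy_rw E t x y = 0" using lazy_support by fast
  have nx: "x \<notin> nbhd E x" using assms(1) by (auto simp: simple_graph_def nbhd_def)
  have "(\<Sum>y\<in>nbhd E x. lazy_rw E t x y) = (\<Sum>y\<in>nbhd E x. t / real (deg E x))"
    by (rule sum.cong) (use nx in \<open>auto simp: lazy_rw_def nbhd_def\<close>)
  also have "\<dots> = t" using assms(3) by (simp add: deg_def)
  finally show "1 = (\<Sum>y\<in>insert x (nbhd E x). lazy_rw E t x y)"
    using nx assms(2) by (simp add: lazy_rw_def)
qed auto

lemma gdist_pos:
  assumes "x \<noteq> x'" "finite_distance E x x'"
  shows "gdist E x x' > 0"
proof -
  obtain n where n: "walk_of_length E x x' n" using assms(2) by (auto simp: finite_distance_def)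
  have "walk_of_length E x x' (gdist E x x')" unfolding gdist_def using n by (rule LeastI)
  moreover have "\<not> walk_of_length E x x' 0" using assms(1) by (auto simp: walk_of_length_def)
  ultimately show ?thesis by (cases "gdist E x x'") auto
qed

lemma cost_lin:
  assumes "finite S" "finite T" "x \<in> S" "x' \<in> T"
  shows "(\<Sum>p\<in>S\<times>T. (a * \<xi> p + b * (if p = (x,x') then 1 else 0)) * (g p::real))
       = a * (\<Sum>p\<in>S\<times>T. \<xi> p * g p) + b * g (x,x')"
proof -
  have "(\<Sum>p\<in>S\<times>T. (a * \<xi> p + b * (if p = (x,x') then 1 else 0)) * g p)
      = (\<Sum>p\<in>S\<times>T. a * (\<xi> p * g p)) + (\<Sum>p\<in>S\<times>T. (if p = (x,x') then b * g p else 0))"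
    by (subst sum.distrib[symmetric]) (rule sum.cong, auto simp: algebra_simps)
  also have "\<dots> = a * (\<Sum>p\<in>S\<times>T. \<xi> p * g p) + b * g (x,x')"
    using assms by (simp add: sum_distrib_left sum.delta)
  finally show ?thesis .
qed

lemma main_step:
  fixes E :: "'a \<Rightarrow> 'a \<Rightarrow> bool" and x x' :: 'a and s t :: real
  assumes G: "simple_graph E" "locally_finite E"
    and xx: "x \<noteq> x'" "finite_distance E x x'"
    and dg: "deg E x > 0" "deg E x' > 0"
    and st: "0 < s" "s \<le> t" "t \<le> 1/2"
  shows "(W1 E (lazy_rw E s x) (lazy_rw E s x') - real (gdist E x x')) / s
       = (W1 E (lazy_rw E t x) (lazy_rw E t x') - real (gdist E x x')) / t"
proof -
  define S where "S = insert x (nbhd E x)"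
  define T where "T = insert x' (nbhd E x')"
  define g where "g = (\<lambda>p. real (gdist E (fst p) (snd p)))"
  define D where "D = real (gdist E x x')"
  define cost where "cost = (\<lambda>\<xi>::'a\<times>'a\<Rightarrow>real. \<Sum>p\<in>S\<times>T. \<xi> p * g p)"
  define C where "C = (\<lambda>r. {\<xi>. coupling (lazy_rw E r x) (lazy_rw E r x') \<xi>})"
  define W where "W = (\<lambda>r. W1 E (lazy_rw E r x) (lazy_rw E r x'))"
  have fS: "finite S" and fT: "finite T" using G(2) by (auto simp: S_def T_def locally_finite_def)
  have xS: "x \<in> S" and xT: "x' \<in> T" by (auto simp: S_def T_def)
  have gD: "g (x,x') = D" by (simp add: g_def D_def)
  have tc: "transport_cost E \<xi> = cost \<xi>" if "\<xi> \<in> C r" for \<xi> r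
    unfolding cost_def g_def
    by (rule cost_finite[where \<mu>="lazy_rw E r x" and \<nu>="lazy_rw E r x'", OF _ fS fT]) (use that in \<open>auto simp: C_def S_def T_def lazy_rw_def nbhd_def\<close>)
  have cnn: "cost \<xi> \<ge> 0" if "\<xi> \<in> C r" for \<xi> r
    using that unfolding cost_def C_def coupling_def g_def by (auto intro!: sum_nonneg)
  have Wdef: "W r = Inf (cost ` C r)" for r
  proof -
    have "transport_cost E ` C r = cost ` C r" using tc by (auto intro!: image_cong)
    then show ?thesis unfolding W_def W1_def C_def by simp
  qed
  have bdd: "bdd_below (cost ` C r)" for r using cnn by (auto intro!: bdd_belowI)
  have tot1: "((lazy_rw E r x) has_sum 1) UNIV" for r
    using lazy_total[OF G(1) _ dg(1)] G(2) by (auto simp: locally_finite_def)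
  have tot2: "((lazy_rw E r x') has_sum 1) UNIV" for r
    using lazy_total[OF G(1) _ dg(2)] G(2) by (auto simp: locally_finite_def)
  have ne: "C r \<noteq> {}" if "0 \<le> r" "r \<le> 1" for r
  proof -
    have "(\<lambda>p. lazy_rw E r x (fst p) * lazy_rw E r x' (snd p)) \<in> C r"
      unfolding C_def coupling_def
    proof (intro CollectI conjI allI)
      fix p show "0 \<le> lazy_rw E r x (fst p) * lazy_rw E r x' (snd p)"
        using lazy_nonneg[OF that, of E x "fst p"] lazy_nonneg[OF that, of E x' "snd p"] by simp
    next
      fix y show "((\<lambda>y'. lazy_rw E r x (fst (y, y')) * lazy_rw E r x' (snd (y, y'))) has_sum
          lazy_rw E r x y) UNIV"
        using has_sum_cmult_right[OF tot2[of r], of "lazy_rw E r x y"] by simp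
    next
      fix y' show "((\<lambda>y. lazy_rw E r x (fst (y, y')) * lazy_rw E r x' (snd (y, y'))) has_sum
          lazy_rw E r x' y') UNIV"
        using has_sum_cmult_left[OF tot1[of r], of "lazy_rw E r x' y'"] by simp
    qed
    then show ?thesis by auto
  qed
  have t0: "0 < t" using st by auto
  have ineq1: "(t/s) * W s - (t/s) * D + D \<le> W t"
  proof -
    have "(t/s) * W s - (t/s) * D + D \<le> cost \<xi>" if xi: "\<xi> \<in> C t" for \<xi>
    proof -
      define \<xi>' where "\<xi>' = (\<lambda>p. (s/t) * \<xi> p + (1 - s/t) * (if p = (x,x') then 1 else 0))"
      have nn: "0 \<le> \<xi> p" for p using xi by (cases p) (auto simp: C_def coupling_def)
      have "0 \<le> s/t" "0 \<le> 1 - s/t" using st by auto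
      then have "(s/t) * \<xi> p + (1 - s/t) * (if p = (x,x') then 1 else 0) \<ge> 0" for p
      proof -
        assume a: "0 \<le> s/t" "0 \<le> 1 - s/t"
        have "0 \<le> (s/t) * \<xi> p" using a nn[of p] by (intro mult_nonneg_nonneg) auto
        moreover have "0 \<le> (1 - s/t) * (if p = (x,x') then 1 else 0)" using a by simp
        ultimately show ?thesis by linarith
      qed
      from lin_coupling[OF _ this] xi have "coupling (lazy_rw E s x) (lazy_rw E s x') \<xi>'"
        unfolding \<xi>'_def C_def using lazy_lin[OF t0, of E s x] lazy_lin[OF t0, of E s x'] by auto
      then have xi': "\<xi>' \<in> C s" by (simp add: C_def)
      have "W s \<le> cost \<xi>'" unfolding Wdef using xi' bdd by (auto intro!: cInf_lower)
      also have "cost \<xi>' = (s/t) * cost \<xi> + (1 - s/t) * D"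
        unfolding cost_def \<xi>'_def by (subst cost_lin[OF fS fT xS xT]) (simp add: gD)
      finally have "W s \<le> (s/t) * cost \<xi> + (1 - s/t) * D" .
      then have "(t/s) * W s \<le> (t/s) * ((s/t) * cost \<xi> + (1 - s/t) * D)"
        using st by (intro mult_left_mono) auto
      also have "\<dots> = cost \<xi> + (t/s) * D - D" using st by (simp add: field_simps)
      finally show ?thesis by simp
    qed
    then show ?thesis unfolding Wdef[of t] using ne[of t] st by (intro cInf_greatest) auto
  qed
  have sumT: "(\<Sum>y'\<in>T. lazy_rw E s x' y') = 1"
  proof -
    have "((lazy_rw E s x') has_sum (\<Sum>y'\<in>T. lazy_rw E s x' y')) UNIV"
      by (rule has_sum_finite_neutralI) (use fT in \<open>auto simp: T_def lazy_rw_def nbhd_def\<close>)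
    then show ?thesis using tot2[of s] has_sum_unique by blast
  qed
  have ineq2: "(s/t) * W t - (s/t) * D + D \<le> W s"
  proof -
    have "(s/t) * W t - (s/t) * D + D \<le> cost \<xi>" if xi: "\<xi> \<in> C s" for \<xi>
    proof -
      have cp: "coupling (lazy_rw E s x) (lazy_rw E s x') \<xi>" using xi by (simp add: C_def)
      have nn: "0 \<le> \<xi> p" for p using xi by (cases p) (auto simp: C_def coupling_def)
      have rs: "(\<Sum>y'\<in>T. \<xi> (x, y')) = 1 - s"
        using row_sum[OF cp fT, of x] xx(1) by (auto simp: T_def lazy_rw_def nbhd_def)
      have "(\<Sum>y'\<in>T - {x'}. \<xi> (x, y')) \<le> (\<Sum>y'\<in>T - {x'}. lazy_rw E s x' y')"
        using coupling_le2[OF cp] by (intro sum_mono) auto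
      also have "\<dots> = s" using sumT fT xT by (simp add: sum.remove lazy_rw_def)
      finally have x1: "1 - 2 * s \<le> \<xi> (x, x')" using rs fT xT by (simp add: sum.remove)
      define \<xi>' where "\<xi>' = (\<lambda>p. (t/s) * \<xi> p + (1 - t/s) * (if p = (x,x') then 1 else 0))"
      have "(t/s) * \<xi> p + (1 - t/s) * (if p = (x,x') then 1 else 0) \<ge> 0" for p
      proof (cases "p = (x,x')")
        case True
        have "t * (1 - 2 * s) + s - t \<ge> 0" using st by (simp add: algebra_simps)
        moreover have "t * \<xi> (x,x') \<ge> t * (1 - 2 * s)" using x1 st
          by (intro mult_left_mono) auto
        ultimately have "t * \<xi> (x,x') + s - t \<ge> 0" by linarith
        then have "(t * \<xi> (x,x') + s - t) / s \<ge> 0" using st by simp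
        moreover have "(t/s) * \<xi> (x,x') + (1 - t/s) = (t * \<xi> (x,x') + s - t) / s"
          using st by (simp add: field_simps)
        ultimately show ?thesis using True by simp
      next
        case False then show ?thesis using nn[of p] st by simp
      qed
      from lin_coupling[OF cp this] have "coupling (lazy_rw E t x) (lazy_rw E t x') \<xi>'"
        unfolding \<xi>'_def using lazy_lin[OF st(1), of E t x] lazy_lin[OF st(1), of E t x'] by auto
      then have xi': "\<xi>' \<in> C t" by (simp add: C_def)
      have "W t \<le> cost \<xi>'" unfolding Wdef using xi' bdd by (auto intro!: cInf_lower)
      also have "cost \<xi>' = (t/s) * cost \<xi> + (1 - t/s) * D"
        unfolding cost_def \<xi>'_def by (subst cost_lin[OF fS fT xS xT]) (simp add: gD)
      finally have "W t \<le> (t/s) * cost \<xi> + (1 - t/s) * D" .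
      then have "(s/t) * W t \<le> (s/t) * ((t/s) * cost \<xi> + (1 - t/s) * D)"
        using st by (intro mult_left_mono) auto
      also have "\<dots> = cost \<xi> + (s/t) * D - D" using st by (simp add: field_simps)
      finally show ?thesis by simp
    qed
    then show ?thesis unfolding Wdef[of s] using ne[of s] st by (intro cInf_greatest) auto
  qed
  have "(W s - D) / s = (W t - D) / t"
  proof -
    have a: "t * (W s - D) \<le> s * (W t - D)"
    proof -
      have "s * ((t/s) * W s - (t/s) * D + D) \<le> s * W t" using ineq1 st by (intro mult_left_mono) auto
      moreover have "s * ((t/s) * W s - (t/s) * D + D) = t * W s - t * D + s * D" using st by (simp add: field_simps)
      ultimately show ?thesis by (simp add: algebra_simps)
    qed
    have b: "s * (W t - D) \<le> t * (W s - D)"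
    proof -
      have "t * ((s/t) * W t - (s/t) * D + D) \<le> t * W s" using ineq2 st by (intro mult_left_mono) auto
      moreover have "t * ((s/t) * W t - (s/t) * D + D) = s * W t - s * D + t * D" using st by (simp add: field_simps)
      ultimately show ?thesis by (simp add: algebra_simps)
    qed
    from a b have "t * (W s - D) = s * (W t - D)" by linarith
    then show ?thesis using st by (simp add: field_simps)
  qed
  then show ?thesis by (simp add: W_def D_def)
qed

theorem proposition1:
  fixes E :: "'a \<Rightarrow> 'a \<Rightarrow> bool" and x x' :: 'a and t :: real
  assumes "simple_graph E" and "locally_finite E"
    and "x \<noteq> x'" and "finite_distance E x x'"
    and "deg E x > 0" and "deg E x' > 0"
    and "0 < t" and "t \<le> 1/2"
  shows "ric E x x' = ereal (kappa E t x x' / t)"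
proof -
  define D where "D = real (gdist E x x')"
  have D0: "D > 0" using gdist_pos[OF assms(3,4)] by (simp add: D_def)
  have eq: "kappa E s x x' / s = kappa E t x x' / t" if "0 < s" "s \<le> 1/2" for s
  proof -
    have q: "(W1 E (lazy_rw E s x) (lazy_rw E s x') - D) / s
       = (W1 E (lazy_rw E t x) (lazy_rw E t x') - D) / t"
    proof (cases "s \<le> t")
      case True then show ?thesis using main_step[OF assms(1-6) that(1) True assms(8)] by (simp add: D_def)
    next
      case False then have ts: "t \<le> s" by simp
      show ?thesis using main_step[OF assms(1-6) assms(7) ts that(2)] by (simp add: D_def)
    qed
    have k: "kappa E r x x' / r = - ((W1 E (lazy_rw E r x) (lazy_rw E r x') - D) / r) / D" if "r > 0" for r
      using D0 that unfolding kappa_def D_def[symmetric] by (simp add: field_simps)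
    show ?thesis using k[OF that(1)] k[OF assms(7)] q by simp
  qed
  have ev: "eventually (\<lambda>s. ereal (kappa E s x x' / s) = ereal (kappa E t x x' / t)) (at_right 0)"
    by (rule eventually_mono[OF eventually_at_right_real[of 0 "1/2::real"]]) (auto intro: eq)
  have "ric E x x' = Liminf (at_right 0) (\<lambda>s::real. ereal (kappa E t x x' / t))"
    unfolding ric_def by (rule Liminf_eq[OF ev])
  also have "\<dots> = ereal (kappa E t x x' / t)" by (rule Liminf_const) simp
  finally show ?thesis .
qed

end
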